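(* Consider the state space model and the extended alive particle filter (APF) described in the context, with $N\ge1$. For every $t\in\{1,\dots,T\}$ and every $t'$ with $t\le t'\le T$, $$\mathbb{E}\left[\frac{\sum_{n=1}^N w_t^{(n)}\, p\!\left(y_{t+1:t'} \,\middle|\, x_t^{(n)}\right)}{P_t - 1}\,\middle|\, \mathcal{F}_{t-1}\right] = \sum_{n=1}^N \frac{w_{t-1}^{(n)}}{\sum_{m=1}^N w_{t-1}^{(m)}}\, p\!\left(y_{t:t'} \,\middle|\, x_{t-1}^{(n)}\right).$$
   Context: State space model: $x_0\sim p(x_0)$; for $t=1,\dots,T$, $x_t \sim f_t(x_t\mid x_{t-1})$ and $y_t\sim g_t(y_t\mid x_t)$; the observations $y_1,\dots,y_T$ are fixed. For $s\ge t$, $p(y_{t:s}\mid x_{t-1})$ denotes the conditional density of $y_t,\dots,y_s$ given $x_{t-1}$ under this model, and $p(y_{t+1:t}\mid x_t):=1$. Extended alive particle filter with $N$ particles: initially draw $x_0^{(1)},\dots,x_0^{(N)}$ independently from $p(x_0)$ and set $w_0^{(n)}=1$. For each $t=1,\dots,T$: set $P_t\gets 0$; for each $n=1,\dots,N+1$, repeat the following until the weight is positive: draw an index $a$ from the categorical distribution with probabilities $w_{t-1}^{(m)}/\sum_{l=1}^N w_{t-1}^{(l)}$, $m=1,\dots,N$; draw $x_t^{(n)}\sim f_t(\cdot\mid x_{t-1}^{(a)})$; increment $P_t$ by one; set $w_t^{(n)} = g_t(y_t\mid x_t^{(n)})$. Thus $P_t$ is the total number of propagations (including those for the $(N+1)$-th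 particle) at time $t$. $\mathcal{F}_t=\{x_t^{(n)},w_t^{(n)}\}_{n=1}^N$ denotes the states and weights of the first $N$ particles at time $t$. *)

theory Defs
  imports "HOL-Probability.Probability"
begin

text \<open>State space model: state space M, transition kernels f t (x_{t-1} to law of x_t),
  likelihoods g t x = g_t(y_t | x) with the observations y fixed.\<close>

text \<open>lik_aux f g t k x = p(y_{t:t+k-1} | x_{t-1} = x).\<close>
primrec lik_aux :: "(nat \<Rightarrow> 'a \<Rightarrow> 'a measure) \<Rightarrow> (nat \<Rightarrow> 'a \<Rightarrow> real) \<Rightarrow> nat \<Rightarrow> nat \<Rightarrow> 'a \<Rightarrow> ennreal" where
  "lik_aux f g t 0 x = 1"
| "lik_aux f g t (Suc k) x = (\<integral>\<^sup>+ x'. ennreal (g t x') * lik_aux f g (Suc t) k x' \<partial>(f t x))"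

text \<open>cond_lik f g t s x = p(y_{t:s} | x_{t-1} = x); equals 1 when s = t - 1.\<close>
definition cond_lik :: "(nat \<Rightarrow> 'a \<Rightarrow> 'a measure) \<Rightarrow> (nat \<Rightarrow> 'a \<Rightarrow> real) \<Rightarrow> nat \<Rightarrow> nat \<Rightarrow> 'a \<Rightarrow> ennreal" where
  "cond_lik f g t s x = lik_aux f g t (Suc s - t) x"

definition apf_trial :: "nat \<Rightarrow> (nat \<Rightarrow> real) \<Rightarrow> (nat \<Rightarrow> 'a) \<Rightarrow> ('a \<Rightarrow> 'a measure) \<Rightarrow> 'a measure" where
  "apf_trial N w xs ft =
     bind (density (count_space {1..N}) (\<lambda>a. ennreal (w a / (\<Sum>m\<in>{1..N}. w m)))) (\<lambda>a. ft (xs a))"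

text \<open>The propagations at time t form an i.i.d. stream of trials; the k-th (0-based)
  particle is the k-th trial with positive weight.\<close>
definition apf_succ :: "('a \<Rightarrow> real) \<Rightarrow> 'a stream \<Rightarrow> nat set" where
  "apf_succ G \<omega> = {i. 0 < G (\<omega> !! i)}"

primrec apf_time :: "('a \<Rightarrow> real) \<Rightarrow> 'a stream \<Rightarrow> nat \<Rightarrow> nat" where
  "apf_time G \<omega> 0 = (LEAST i. 0 < G (\<omega> !! i))"
| "apf_time G \<omega> (Suc k) = (LEAST i. apf_time G \<omega> k < i \<and> 0 < G (\<omega> !! i))"

definition apf_done :: "('a \<Rightarrow> real) \<Rightarrow> nat \<Rightarrow> 'a stream \<Rightarrow> bool" where
  "apf_done G N \<omega> \<longleftrightarrow> infinite (apf_succ G \<omega>) \<or> N < card (apf_succ G \<omega>)"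

definition apf_particle :: "('a \<Rightarrow> real) \<Rightarrow> 'a stream \<Rightarrow> nat \<Rightarrow> 'a" where
  "apf_particle G \<omega> n = \<omega> !! apf_time G \<omega> (n - 1)"

definition apf_P :: "('a \<Rightarrow> real) \<Rightarrow> nat \<Rightarrow> 'a stream \<Rightarrow> nat" where
  "apf_P G N \<omega> = Suc (apf_time G \<omega> N)"

end

theory Submission
  imports Defs
begin


definition cnt :: "('a \<Rightarrow> real) \<Rightarrow> nat \<Rightarrow> 'a stream \<Rightarrow> nat" where
  "cnt G m \<omega> = (\<Sum>i<m. if 0 < G (\<omega> !! i) then 1 else 0)"

lemma cnt_0[simp]: "cnt G 0 \<omega> = 0" by (simp add: cnt_def)
lemma cnt_Suc: "cnt G (Suc m) \<omega> = cnt G m \<omega> + (if 0 < G (\<omega> !! m) then 1 else 0)"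
  by (simp add: cnt_def)
lemma cnt_Suc_Cons: "cnt G (Suc m) (x ## \<omega>) = (if 0 < G x then 1 else 0) + cnt G m \<omega>"
  unfolding cnt_def by (subst sum.lessThan_Suc_shift) simp

lemma cnt_card: "cnt G m \<omega> = card {i. i < m \<and> 0 < G (\<omega> !! i)}"
proof (induct m)
  case 0 then show ?case by simp
next
  case (Suc m)
  have "{i. i < Suc m \<and> 0 < G (\<omega> !! i)} = (if 0 < G (\<omega> !! m) then insert m {i. i < m \<and> 0 < G (\<omega> !! i)} else {i. i < m \<and> 0 < G (\<omega> !! i)})"
    by (auto simp: less_Suc_eq)
  then show ?case using Suc by (simp add: cnt_Suc)
qed

lemma cnt_mono: "m \<le> m' \<Longrightarrow> cnt G m \<omega> \<le> cnt G m' \<omega>"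
  by (induct m' rule: dec_induct) (auto simp: cnt_Suc)

lemma cnt_strict: "i < m \<Longrightarrow> 0 < G (\<omega> !! i) \<Longrightarrow> cnt G i \<omega> < cnt G m \<omega>"
  using cnt_mono[of "Suc i" m G \<omega>] by (simp add: cnt_Suc)

lemma time_eq: "0 < G (\<omega> !! m) \<Longrightarrow> cnt G m \<omega> = k \<Longrightarrow> apf_time G \<omega> k = m"
proof (induct k arbitrary: m)
  case 0
  then have "\<forall>i<m. \<not> 0 < G (\<omega> !! i)" using cnt_strict[of _ m G \<omega>] by fastforce
  then show ?case using 0 by (auto intro!: Least_equality simp: not_less[symmetric])
next
  case (Suc k)
  define S where "S = {i. i < m \<and> 0 < G (\<omega> !! i)}"
  have "S \<noteq> {}" using Suc.prems(2) unfolding S_def cnt_card by (metis card.empty nat.distinct(1))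
  moreover have fS: "finite S" by (auto simp: S_def)
  ultimately have jS: "Max S \<in> S" by simp
  define j where "j = Max S"
  have jm: "j < m" and sj: "0 < G (\<omega> !! j)" using jS by (auto simp: S_def j_def)
  have none: "\<not> 0 < G (\<omega> !! i)" if "j < i" "i < m" for i
    proof
    assume "0 < G (\<omega> !! i)"
    then have "i \<in> S" using that by (auto simp: S_def)
    then show False using Max_ge[OF fS, of i] that by (simp add: j_def)
  qed
  have "S = insert j {i. i < j \<and> 0 < G (\<omega> !! i)}"
    using jm sj none by (auto simp: S_def) (meson linorder_neqE_nat)
  then have "cnt G m \<omega> = Suc (cnt G j \<omega>)" by (simp add: cnt_card S_def[symmetric])
  then have "cnt G j \<omega> = k" using Suc by simp
  then have "apf_time G \<omega> k = j" using Suc sj by simp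
  then show ?case using Suc jm none
    by (auto intro!: Least_equality simp: not_less[symmetric])
qed

lemma cnt_exists: "k < cnt G m \<omega> \<Longrightarrow> \<exists>i<m. 0 < G (\<omega> !! i) \<and> cnt G i \<omega> = k"
proof (induct m)
  case 0 then show ?case by simp
next
  case (Suc m)
  show ?case
  proof (cases "k < cnt G m \<omega>")
    case True then show ?thesis using Suc by (meson less_SucI)
  next
    case False
    then show ?thesis using Suc.prems by (auto simp: cnt_Suc split: if_splits intro!: exI[of _ m])
  qed
qed

lemma done_iff: "apf_done G N \<omega> \<longleftrightarrow> (\<exists>m. 0 < G (\<omega> !! m) \<and> cnt G m \<omega> = N)"
proof
  assume "apf_done G N \<omega>"
  then obtain B where B: "finite B" "B \<subseteq> apf_succ G \<omega>" "card B = Suc N"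
    unfolding apf_done_def
    by (metis infinite_arbitrarily_large Suc_leI obtain_subset_with_card_n)
  then have "B \<noteq> {}" by auto
  have "B \<subseteq> {i. i < Suc (Max B) \<and> 0 < G (\<omega> !! i)}"
    using B by (auto simp: apf_succ_def le_imp_less_Suc)
  then have "card B \<le> cnt G (Suc (Max B)) \<omega>"
    unfolding cnt_card by (intro card_mono) auto
  then have "N < cnt G (Suc (Max B)) \<omega>" using B by simp
  then show "\<exists>m. 0 < G (\<omega> !! m) \<and> cnt G m \<omega> = N" using cnt_exists by blast
next
  assume "\<exists>m. 0 < G (\<omega> !! m) \<and> cnt G m \<omega> = N"
  then obtain m where m: "0 < G (\<omega> !! m)" "cnt G m \<omega> = N" by blast
  have "{i. i < Suc m \<and> 0 < G (\<omega> !! i)} \<subseteq> apf_succ G \<omega>" by (auto simp: apf_succ_def)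
  moreover have "card {i. i < Suc m \<and> 0 < G (\<omega> !! i)} = Suc N"
    using m by (simp add: cnt_card[symmetric] cnt_Suc)
  ultimately show "apf_done G N \<omega>" unfolding apf_done_def
    by (metis card_mono lessI order_less_le_trans)
qed

lemma sum_particles:
  fixes h :: "'a \<Rightarrow> ennreal"
  assumes h0: "\<And>x. \<not> 0 < G x \<Longrightarrow> h x = 0"
    and m: "0 < G (\<omega> !! m)" "cnt G m \<omega> = N"
  shows "(\<Sum>n\<in>{1..N}. h (apf_particle G \<omega> n)) = (\<Sum>i<m. h (\<omega> !! i))"
proof -
  have "(\<Sum>n\<in>{1..N}. h (apf_particle G \<omega> n)) = (\<Sum>k<N. h (\<omega> !! apf_time G \<omega> k))"
    unfolding apf_particle_def
    by (rule sum.reindex_bij_witness[where i=Suc and j="\<lambda>n. n - 1"]) auto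
  also have "\<dots> = (\<Sum>i\<in>{i. i < m \<and> 0 < G (\<omega> !! i)}. h (\<omega> !! i))"
  proof (rule sum.reindex_bij_witness[where i="\<lambda>i. cnt G i \<omega>" and j="apf_time G \<omega>"])
    fix k assume "k \<in> {..<N}"
    then obtain i where i: "i < m" "0 < G (\<omega> !! i)" "cnt G i \<omega> = k" using cnt_exists[of k G m \<omega>] m by auto
    then have "apf_time G \<omega> k = i" using time_eq i(2,3) by blast
    then show "cnt G (apf_time G \<omega> k) \<omega> = k" "apf_time G \<omega> k \<in> {i. i < m \<and> 0 < G (\<omega> !! i)}"
      using i by auto
  next
    fix i assume "i \<in> {i. i < m \<and> 0 < G (\<omega> !! i)}"
    then show "apf_time G \<omega> (cnt G i \<omega>) = i" "cnt G i \<omega> \<in> {..<N}"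
      using time_eq[of G \<omega> i] cnt_strict[of i m G \<omega>] m by auto
  qed simp
  also have "\<dots> = (\<Sum>i<m. h (\<omega> !! i))"
    by (rule sum.mono_neutral_left) (auto simp: h0)
  finally show ?thesis .
qed



definition ind :: "('a \<Rightarrow> real) \<Rightarrow> nat \<Rightarrow> nat \<Rightarrow> 'a stream \<Rightarrow> ennreal" where
  "ind G k m \<omega> = (if 0 < G (\<omega> !! m) \<and> cnt G m \<omega> = k then 1 else 0)"

lemma ind_0_Cons: "ind G k 0 (x ## \<omega>) = (if 0 < G x \<and> k = 0 then 1 else 0)"
  by (simp add: ind_def)

lemma ind_Suc_Cons: "ind G k (Suc m) (x ## \<omega>) =
   (if 0 < G x then (if k = 0 then 0 else ind G (k - 1) m \<omega>) else ind G k m \<omega>)"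
  by (cases k) (auto simp: ind_def cnt_Suc_Cons)

lemma pred_cnt:
  assumes [measurable]: "G \<in> borel_measurable Q"
  shows "Measurable.pred (stream_space Q) (\<lambda>\<omega>. cnt G m \<omega> = k)"
proof (induct m arbitrary: k)
  case 0 then show ?case by simp
next
  case (Suc m)
  note Suc[measurable]
  have eq: "(\<lambda>\<omega>. cnt G (Suc m) \<omega> = k) = (\<lambda>\<omega>. (cnt G m \<omega> = k \<and> \<not> 0 < G (\<omega> !! m)) \<or> (0 < G (\<omega> !! m) \<and> k \<noteq> 0 \<and> cnt G m \<omega> = k - 1))"
    by (auto simp: cnt_Suc)
  show ?case unfolding eq by measurable
qed

lemma ind_meas[measurable]:
  assumes [measurable]: "G \<in> borel_measurable Q"
  shows "ind G k m \<in> borel_measurable (stream_space Q)"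
proof -
  note pred_cnt[OF assms, measurable]
  show ?thesis unfolding ind_def by measurable
qed

lemma ind_unique: "ind G k m' \<omega> = (if m' = m then 1 else 0)"
  if m: "0 < G (\<omega> !! m)" "cnt G m \<omega> = k"
proof (cases "0 < G (\<omega> !! m') \<and> cnt G m' \<omega> = k")
  case True
  then have "m' = m" using time_eq[of G \<omega> m k, OF m] time_eq[of G \<omega> m' k] by metis
  then show ?thesis using True by (simp add: ind_def)
next
  case False
  then have "m' \<noteq> m" using m by blast
  then show ?thesis using False by (simp add: ind_def)
qed

lemma ind_sum_le1: "(\<Sum>m. ind G k m \<omega>) \<le> 1"
proof (cases "\<exists>m. 0 < G (\<omega> !! m) \<and> cnt G m \<omega> = k")
  case True
  then obtain m where m: "0 < G (\<omega> !! m)" "cnt G m \<omega> = k" by blast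
  have "(\<Sum>m'. ind G k m' \<omega>) = (\<Sum>m'. if m' = m then 1 else 0)"
    using ind_unique[OF m] by presburger
  also have "\<dots> = 1" using sums_single[of m "\<lambda>_. 1::ennreal"] sums_unique by fastforce
  finally show ?thesis by simp
next
  case False
  then have "\<And>m'. ind G k m' \<omega> = 0" unfolding ind_def by auto
  then show ?thesis by simp
qed

lemma solve1:
  fixes a qs qf :: ennreal
  assumes "a \<le> 1" "qs + qf = 1" "0 < qs" "a = qs + qf * a"
  shows "a = 1"
proof -
  have f: "a \<noteq> top" "qs \<noteq> top" "qf \<noteq> top" using assms
    by (auto simp: top_unique)
  obtain x y z where xyz: "a = ennreal x" "qs = ennreal y" "qf = ennreal z" "0 \<le> x" "0 \<le> y" "0 \<le> z"
    using f by (metis ennreal_cases)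
  have "x = y + z * x" "y + z = 1" "0 < y" "x \<le> 1"
    using assms xyz by (auto simp: ennreal_mult'[symmetric] ennreal_plus[symmetric] simp del: ennreal_plus)
  then have "z = 1 - y" "x = y + z * x" "0 < y" by linarith+
  then have e: "x = y + (1 - y) * x" "0 < y" by simp_all
  have "(1 - y) * x = x - y * x" by (simp add: left_diff_distrib)
  then have "y * x = y * 1" using e by linarith
  then have "x = 1" using e(2) by simp
  then show ?thesis using xyz by simp
qed

locale apf_setup =
  fixes Q :: "'a measure" and G :: "'a \<Rightarrow> real" and h :: "'a \<Rightarrow> ennreal"
  assumes Q: "prob_space Q"
    and G[measurable]: "G \<in> borel_measurable Q"
    and h[measurable]: "h \<in> borel_measurable Q"
    and h0: "\<And>x. \<not> 0 < G x \<Longrightarrow> h x = 0"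
begin

abbreviation "S \<equiv> stream_space Q"
definition "qs = (\<integral>\<^sup>+x. (if 0 < G x then 1 else 0) \<partial>Q)"
definition "qf = (\<integral>\<^sup>+x. (if 0 < G x then 0 else 1) \<partial>Q)"
definition "H = (\<integral>\<^sup>+x. h x \<partial>Q)"
definition "A k m = (\<integral>\<^sup>+\<omega>. ind G k m \<omega> \<partial>S)"
definition "B k m i = (\<integral>\<^sup>+\<omega>. ind G k m \<omega> * h (\<omega> !! i) \<partial>S)"

lemma qsqf: "qs + qf = 1"
proof -
  have "qs + qf = (\<integral>\<^sup>+x. (if 0 < G x then 1 else 0) + (if 0 < G x then 0 else 1) \<partial>Q)"
    unfolding qs_def qf_def by (subst nn_integral_add) auto
  also have "\<dots> = (\<integral>\<^sup>+x. 1 \<partial>Q)" by (intro nn_integral_cong) auto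
  also have "\<dots> = 1" using prob_space.emeasure_space_1[OF Q] by simp
  finally show ?thesis .
qed

lemma int_if: "(\<integral>\<^sup>+x. (if 0 < G x then a else b) \<partial>Q) = a * qs + b * qf"
proof -
  have "(\<integral>\<^sup>+x. (if 0 < G x then a else b) \<partial>Q) = (\<integral>\<^sup>+x. a * (if 0 < G x then 1 else 0) + b * (if 0 < G x then 0 else 1) \<partial>Q)"
    by (intro nn_integral_cong) auto
  also have "\<dots> = a * qs + b * qf"
    unfolding qs_def qf_def by (subst nn_integral_add) (auto simp: nn_integral_cmult)
  finally show ?thesis .
qed

lemmas decomp = prob_space.nn_integral_stream_space[OF Q]

lemma A_0: "A k 0 = (if k = 0 then qs else 0)"
proof -
  have "A k 0 = (\<integral>\<^sup>+x. (\<integral>\<^sup>+\<omega>. ind G k 0 (x ## \<omega>) \<partial>S) \<partial>Q)"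
    unfolding A_def by (rule decomp) measurable
  also have "\<dots> = (\<integral>\<^sup>+x. (if 0 < G x then (if k = 0 then 1 else 0) else 0) \<partial>Q)"
    by (intro nn_integral_cong) (auto simp: ind_0_Cons prob_space.emeasure_space_1[OF prob_space.prob_space_stream_space[OF Q]])
  also have "\<dots> = (if k = 0 then qs else 0)" by (simp add: int_if)
  finally show ?thesis .
qed

lemma A_Suc: "A k (Suc m) = (if k = 0 then 0 else A (k - 1) m) * qs + A k m * qf" (is "_ = ?R")
proof -
  have "A k (Suc m) = (\<integral>\<^sup>+x. (\<integral>\<^sup>+\<omega>. ind G k (Suc m) (x ## \<omega>) \<partial>S) \<partial>Q)"
    unfolding A_def by (rule decomp) measurable
  also have "\<dots> = (\<integral>\<^sup>+x. (if 0 < G x then (if k = 0 then 0 else A (k - 1) m) else A k m) \<partial>Q)"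
    by (intro nn_integral_cong) (auto simp: ind_Suc_Cons A_def)
  also have "\<dots> = ?R" by (rule int_if)
  finally show ?thesis .
qed

lemma B_Suc_0: "B k (Suc m) 0 = (if k = 0 then 0 else A (k - 1) m) * H" (is "_ = ?R")
proof -
  have "B k (Suc m) 0 = (\<integral>\<^sup>+x. (\<integral>\<^sup>+\<omega>. ind G k (Suc m) (x ## \<omega>) * h ((x ## \<omega>) !! 0) \<partial>S) \<partial>Q)"
    unfolding B_def by (rule decomp) measurable
  also have "\<dots> = (\<integral>\<^sup>+x. (if k = 0 then 0 else A (k - 1) m) * h x \<partial>Q)"
  proof (intro nn_integral_cong)
    fix x
    show "(\<integral>\<^sup>+\<omega>. ind G k (Suc m) (x ## \<omega>) * h ((x ## \<omega>) !! 0) \<partial>S) = (if k = 0 then 0 else A (k - 1) m) * h x"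
    proof (cases "0 < G x")
      case True then show ?thesis
        by (auto simp: ind_Suc_Cons A_def nn_integral_multc)
    next
      case False then show ?thesis by (simp add: h0)
    qed
  qed
  also have "\<dots> = ?R" unfolding H_def by (rule nn_integral_cmult) simp
  finally show ?thesis .
qed

lemma B_Suc_Suc: "B k (Suc m) (Suc i) = (if k = 0 then 0 else B (k - 1) m i) * qs + B k m i * qf" (is "_ = ?R")
proof -
  have "B k (Suc m) (Suc i) = (\<integral>\<^sup>+x. (\<integral>\<^sup>+\<omega>. ind G k (Suc m) (x ## \<omega>) * h ((x ## \<omega>) !! Suc i) \<partial>S) \<partial>Q)"
    unfolding B_def by (rule decomp) measurable
  also have "\<dots> = (\<integral>\<^sup>+x. (if 0 < G x then (if k = 0 then 0 else B (k - 1) m i) else B k m i) \<partial>Q)"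
    by (intro nn_integral_cong) (auto simp: ind_Suc_Cons B_def)
  also have "\<dots> = ?R" by (rule int_if)
  finally show ?thesis .
qed

lemma B_zero: "i < m \<Longrightarrow> B 0 m i = 0"
proof (induct m arbitrary: i)
  case 0 then show ?case by simp
next
  case (Suc m)
  then show ?case by (cases i) (auto simp: B_Suc_0 B_Suc_Suc)
qed

lemma B_formula: "i \<le> m \<Longrightarrow> B (Suc k) (Suc m) i = A k m * H"
proof (induct m arbitrary: i k)
  case 0 then show ?case by (simp add: B_Suc_0)
next
  case (Suc m)
  show ?case
  proof (cases i)
    case 0 then show ?thesis by (simp add: B_Suc_0)
  next
    case (Suc i')
    then have i': "i' \<le> m" using Suc.prems by simp
    show ?thesis
    proof (cases k)
      case 0
      then show ?thesis using Suc.hyps[OF i', of 0] B_zero[of i' "Suc m"] i'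
        by (simp add: B_Suc_Suc A_Suc \<open>i = Suc i'\<close> algebra_simps)
    next
      case (Suc k')
      then show ?thesis using Suc.hyps[OF i', of k] Suc.hyps[OF i', of k']
        by (simp add: B_Suc_Suc A_Suc \<open>i = Suc i'\<close> algebra_simps)
    qed
  qed
qed


lemma hsnth[measurable]: "(\<lambda>\<omega>. h (\<omega> !! i)) \<in> borel_measurable S"
  by measurable

lemma A_sum_le: "(\<Sum>m. A k m) \<le> 1"
proof -
  have "(\<Sum>m. A k m) = (\<integral>\<^sup>+\<omega>. (\<Sum>m. ind G k m \<omega>) \<partial>S)"
    unfolding A_def by (rule nn_integral_suminf[symmetric]) measurable
  also have "\<dots> \<le> (\<integral>\<^sup>+\<omega>. 1 \<partial>S)" by (intro nn_integral_mono ind_sum_le1)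
  also have "\<dots> = 1" using prob_space.emeasure_space_1[OF prob_space.prob_space_stream_space[OF Q]] by simp
  finally show ?thesis .
qed

lemma A_sum: "0 < qs \<Longrightarrow> (\<Sum>m. A k m) = 1"
proof (induct k)
  case 0
  have "(\<Sum>m. A 0 m) = (\<Sum>m. A 0 (m + 1)) + (\<Sum>m<1. A 0 m)"
    by (rule suminf_offset) simp
  also have "\<dots> = (\<Sum>m. A 0 m * qf) + qs" by (simp add: A_Suc A_0)
  also have "\<dots> = qs + qf * (\<Sum>m. A 0 m)" by (simp add: mult.commute)
  finally show ?case using solve1[OF A_sum_le qsqf 0] by simp
next
  case (Suc k)
  have "(\<Sum>m. A (Suc k) m) = (\<Sum>m. A (Suc k) (m + 1)) + (\<Sum>m<1. A (Suc k) m)"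
    by (rule suminf_offset) simp
  also have "\<dots> = (\<Sum>m. A k m * qs + A (Suc k) m * qf)" by (simp add: A_Suc A_0)
  also have "\<dots> = (\<Sum>m. A k m * qs) + (\<Sum>m. A (Suc k) m * qf)" by (rule suminf_add[symmetric]) simp_all
  also have "\<dots> = qs + qf * (\<Sum>m. A (Suc k) m)" using Suc by (simp add: mult.commute)
  finally show ?case using solve1[OF A_sum_le qsqf Suc(2)] by simp
qed

lemma H_zero: "qs = 0 \<Longrightarrow> H = 0"
proof -
  assume "qs = 0"
  then have "AE x in Q. (if 0 < G x then 1 else 0 :: ennreal) = 0"
    unfolding qs_def by (subst (asm) nn_integral_0_iff_AE) auto
  then have "AE x in Q. h x = 0" by eventually_elim (auto simp: h0 split: if_splits)
  then have "H = (\<integral>\<^sup>+x. 0 \<partial>Q)" unfolding H_def by (rule nn_integral_cong_AE)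
  then show "H = 0" by simp
qed

lemma H_A_sum: "(\<Sum>m. A k m) * H = H"
proof (cases "qs = 0")
  case True then show ?thesis using H_zero by simp
next
  case False then show ?thesis using A_sum[of k] by (simp add: zero_less_iff_neq_zero)
qed

lemma integrand_eq:
  assumes N: "1 \<le> N"
  shows "(if apf_done G N \<omega> then (\<Sum>n\<in>{1..N}. h (apf_particle G \<omega> n)) / of_nat (apf_P G N \<omega> - 1) else 0)
    = (\<Sum>m. ind G N m \<omega> * (\<Sum>i<m. h (\<omega> !! i)) / of_nat m)"
proof (cases "apf_done G N \<omega>")
  case True
  then obtain m where m: "0 < G (\<omega> !! m)" "cnt G m \<omega> = N" using done_iff by blast
  have P: "apf_P G N \<omega> - 1 = m" using time_eq[OF m] by (simp add: apf_P_def)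
  have "(\<Sum>m'. ind G N m' \<omega> * (\<Sum>i<m'. h (\<omega> !! i)) / of_nat m') =
        (\<Sum>m'. if m' = m then (\<Sum>i<m. h (\<omega> !! i)) / of_nat m else 0)"
    using ind_unique[OF m] by (intro suminf_cong) simp
  also have "\<dots> = (\<Sum>i<m. h (\<omega> !! i)) / of_nat m"
    using sums_single[of m "\<lambda>_. (\<Sum>i<m. h (\<omega> !! i)) / of_nat m"] sums_unique by fastforce
  finally show ?thesis using True P sum_particles[where h=h, OF h0 m] by simp
next
  case False
  then have "\<And>m'. ind G N m' \<omega> = 0" using done_iff unfolding ind_def by auto
  then show ?thesis using False by simp
qed

lemma main:
  assumes N: "1 \<le> N"
  shows "(\<integral>\<^sup>+\<omega>. (if apf_done G N \<omega> then (\<Sum>n\<in>{1..N}. h (apf_particle G \<omega> n)) / of_nat (apf_P G N \<omega> - 1) else 0) \<partial>S) = H"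
proof -
  have "(\<integral>\<^sup>+\<omega>. (if apf_done G N \<omega> then (\<Sum>n\<in>{1..N}. h (apf_particle G \<omega> n)) / of_nat (apf_P G N \<omega> - 1) else 0) \<partial>S)
     = (\<integral>\<^sup>+\<omega>. (\<Sum>m. ind G N m \<omega> * (\<Sum>i<m. h (\<omega> !! i)) / of_nat m) \<partial>S)"
    by (intro nn_integral_cong integrand_eq[OF N])
  also have "\<dots> = (\<Sum>m. \<integral>\<^sup>+\<omega>. ind G N m \<omega> * (\<Sum>i<m. h (\<omega> !! i)) / of_nat m \<partial>S)"
    by (rule nn_integral_suminf) measurable
  also have "\<dots> = (\<Sum>m. (\<Sum>i<m. B N m i) / of_nat m)"
  proof (intro suminf_cong)
    fix m
    have "(\<integral>\<^sup>+\<omega>. ind G N m \<omega> * (\<Sum>i<m. h (\<omega> !! i)) / of_nat m \<partial>S)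
       = (\<integral>\<^sup>+\<omega>. (\<Sum>i<m. ind G N m \<omega> * h (\<omega> !! i)) \<partial>S) / of_nat m"
      by (subst nn_integral_divide[symmetric]) (measurable, simp add: sum_distrib_left)
    also have "\<dots> = (\<Sum>i<m. B N m i) / of_nat m"
      unfolding B_def by (subst nn_integral_sum) (auto intro!: borel_measurable_times_ennreal)
    finally show "(\<integral>\<^sup>+\<omega>. ind G N m \<omega> * (\<Sum>i<m. h (\<omega> !! i)) / of_nat m \<partial>S) = (\<Sum>i<m. B N m i) / of_nat m" .
  qed
  also have "\<dots> = (\<Sum>m. (\<Sum>i<m + 1. B N (m + 1) i) / of_nat (m + 1)) + (\<Sum>m<1. (\<Sum>i<m. B N m i) / of_nat m)"
    by (rule suminf_offset) simp
  also have "\<dots> = (\<Sum>m. A (N - 1) m * H)"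
  proof -
    have "(\<Sum>i<m + 1. B N (m + 1) i) / of_nat (m + 1) = A (N - 1) m * H" for m
    proof -
      have NS: "N = Suc (N - 1)" using N by simp
      have "(\<Sum>i<m + 1. B N (m + 1) i) = (\<Sum>i<m + 1. A (N - 1) m * H)"
        by (intro sum.cong refl) (subst NS, simp add: B_formula)
      also have "\<dots> = (A (N - 1) m * H) * of_nat (m + 1)" by (simp add: mult.commute)
      finally show ?thesis by (simp add: ennreal_mult_divide_eq ennreal_of_nat_neq_top del: of_nat_Suc)
    qed
    then show ?thesis by simp
  qed
  also have "\<dots> = H" using H_A_sum[of "N - 1"] by (simp add: mult.commute)
  finally show ?thesis .
qed

lemma main2:
  assumes N: "1 \<le> N"
  shows "(\<integral>\<^sup>+\<omega>. (if apf_done G N \<omega> then (\<Sum>n\<in>{1..N}. h (apf_particle G \<omega> n)) / of_nat (apf_P G N \<omega> - 1) else 0) \<partial>S) = (\<integral>\<^sup>+x. h x \<partial>Q)"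
  using main[OF N] by (simp add: H_def)

end

lemma lik_meas:
  assumes kernel: "\<And>s. s \<in> {1..T} \<Longrightarrow> f s \<in> M \<rightarrow>\<^sub>M prob_algebra M"
    and g_meas: "\<And>s. s \<in> {1..T} \<Longrightarrow> g s \<in> borel_measurable M"
  shows "1 \<le> s \<Longrightarrow> s + k \<le> Suc T \<Longrightarrow> lik_aux f g s k \<in> borel_measurable M"
proof (induct k arbitrary: s)
  case 0 then show ?case by simp
next
  case (Suc k)
  have sT: "s \<in> {1..T}" using Suc.prems by simp
  have L: "lik_aux f g (Suc s) k \<in> borel_measurable M" using Suc by simp
  have gs: "g s \<in> borel_measurable M" using g_meas[OF sT] .
  have "(\<lambda>x'. ennreal (g s x') * lik_aux f g (Suc s) k x') \<in> borel_measurable M"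
    using L gs by measurable
  from nn_integral_measurable_subprob_algebra[OF this]
  have "(\<lambda>x. \<integral>\<^sup>+x'. ennreal (g s x') * lik_aux f g (Suc s) k x' \<partial>(f s x)) \<in> borel_measurable M"
    by (rule measurable_compose[OF measurable_prob_algebraD[OF kernel[OF sT]], rotated])
  then show ?case by simp
qed

theorem lemma2:
  fixes M :: "'a measure"
    and f :: "nat \<Rightarrow> 'a \<Rightarrow> 'a measure"
    and g :: "nat \<Rightarrow> 'a \<Rightarrow> real"
    and T N t t' :: nat
    and xs :: "nat \<Rightarrow> 'a" and w :: "nat \<Rightarrow> real"
  assumes kernel: "\<And>s. s \<in> {1..T} \<Longrightarrow> f s \<in> M \<rightarrow>\<^sub>M prob_algebra M"
    and g_meas: "\<And>s. s \<in> {1..T} \<Longrightarrow> g s \<in> borel_measurable M"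
    and g_nonneg: "\<And>s x. s \<in> {1..T} \<Longrightarrow> x \<in> space M \<Longrightarrow> 0 \<le> g s x"
    and N: "1 \<le> N"
    and t: "1 \<le> t" "t \<le> t'" "t' \<le> T"
    and xs: "\<And>n. n \<in> {1..N} \<Longrightarrow> xs n \<in> space M"
    and w_nonneg: "\<And>n. n \<in> {1..N} \<Longrightarrow> 0 \<le> w n"
    and w_pos: "0 < (\<Sum>m\<in>{1..N}. w m)"
  shows "(\<integral>\<^sup>+ \<omega>. (if apf_done (g t) N \<omega> then
            (\<Sum>n\<in>{1..N}. ennreal (g t (apf_particle (g t) \<omega> n))
                 * cond_lik f g (Suc t) t' (apf_particle (g t) \<omega> n))
            / of_nat (apf_P (g t) N \<omega> - 1)
          else 0)
        \<partial>(stream_space (apf_trial N w xs (f t))))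
       = (\<Sum>n\<in>{1..N}. ennreal (w n / (\<Sum>m\<in>{1..N}. w m)) * cond_lik f g t t' (xs n))"
proof -
  define W where "W = (\<Sum>m\<in>{1..N}. w m)"
  define D where "D = density (count_space {1..N}) (\<lambda>a. ennreal (w a / W))"
  define K where "K = (\<lambda>a. f t (xs a))"
  define Q where "Q = apf_trial N w xs (f t)"
  have QDK: "Q = D \<bind> K" unfolding Q_def D_def K_def apf_trial_def W_def by simp
  have tT: "t \<in> {1..T}" using t by simp
  have sD: "sets D = sets (count_space {1..N})" unfolding D_def by simp
  have "emeasure D (space D) = (\<Sum>a\<in>{1..N}. ennreal (w a / W))"
    unfolding D_def by (simp add: emeasure_density nn_integral_count_space_finite)
  also have "\<dots> = ennreal (\<Sum>a\<in>{1..N}. w a / W)"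
    using w_nonneg w_pos by (subst sum_ennreal) (auto simp: W_def)
  also have "\<dots> = 1" using w_pos by (simp add: W_def sum_divide_distrib[symmetric])
  finally have pD: "prob_space D" by (rule prob_spaceI)
  have Dspace: "D \<in> space (prob_algebra (count_space {1..N}))"
    using pD sD by (simp add: space_prob_algebra)
  have Kmeas: "K \<in> count_space {1..N} \<rightarrow>\<^sub>M prob_algebra M"
    using measurable_space[OF kernel[OF tT] xs] by (simp add: K_def)
  have pQ: "prob_space Q" unfolding QDK by (rule prob_space_bind'[OF Dspace Kmeas])
  have sQ: "sets Q = sets M" unfolding QDK by (rule sets_bind'[OF Dspace Kmeas])
  define L where "L = cond_lik f g (Suc t) t'"
  have L_eq: "L = lik_aux f g (Suc t) (t' - t)" unfolding L_def cond_lik_def by (rule ext) simp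
  have Lm: "L \<in> borel_measurable M" unfolding L_eq
    by (rule lik_meas[OF kernel g_meas]) (use t in auto)
  have gm: "g t \<in> borel_measurable M" using g_meas[OF tT] .
  define h where "h = (\<lambda>x. ennreal (g t x) * L x)"
  have hM: "h \<in> borel_measurable M" unfolding h_def using Lm gm by measurable
  interpret apf_setup Q "g t" h
  proof (rule apf_setup.intro)
    show "prob_space Q" by (rule pQ)
    show "g t \<in> borel_measurable Q" using gm by (simp add: measurable_cong_sets[OF sQ refl])
    show "h \<in> borel_measurable Q" using hM by (simp add: measurable_cong_sets[OF sQ refl])
    show "\<And>x. \<not> 0 < g t x \<Longrightarrow> h x = 0" by (simp add: h_def ennreal_neg)
  qed
  have "(\<integral>\<^sup>+x. h x \<partial>Q) = (\<integral>\<^sup>+a. (\<integral>\<^sup>+y. h y \<partial>K a) \<partial>D)"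
    unfolding QDK
    by (rule nn_integral_bind[OF hM]) (simp only: measurable_cong_sets[OF sD refl] measurable_prob_algebraD[OF Kmeas])
  also have "\<dots> = (\<Sum>a\<in>{1..N}. ennreal (w a / W) * (\<integral>\<^sup>+y. h y \<partial>K a))"
    unfolding D_def by (simp add: nn_integral_density nn_integral_count_space_finite)
  also have "\<dots> = (\<Sum>n\<in>{1..N}. ennreal (w n / W) * cond_lik f g t t' (xs n))"
  proof (intro sum.cong refl arg_cong2[where f="(*)"])
    fix n
    have "Suc t' - t = Suc (t' - t)" using t by simp
    then show "(\<integral>\<^sup>+y. h y \<partial>K n) = cond_lik f g t t' (xs n)"
      by (simp add: cond_lik_def K_def h_def L_eq)
  qed
  finally have HR: "(\<integral>\<^sup>+x. h x \<partial>Q) = (\<Sum>n\<in>{1..N}. ennreal (w n / W) * cond_lik f g t t' (xs n))" .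
  show ?thesis
    using main2[OF N] HR unfolding h_def L_def Q_def W_def by simp
qed

end
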